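(* Let $\rho_A,\rho_B\in\mathcal{P}(\mathcal{X})$, $h=1/N$, and let $(\rho_h,m_h)\in V^1_{n,h}\times V^0_{e,h}$ with $\mathcal{E}_h(\rho_h,m_h)\le\bar E<\infty$. Then there is a constant $\bar M<\infty$ depending only on $(\mathcal{X},Q,\pi)$ and $\bar E$ (and not on $h$) such that $\|m_h\|_{L^2([0,1],\mathbb{R}^{\mathcal{X}\times\mathcal{X}})}\le\bar M$.
   Context: Setting: $\mathcal{X}$ finite, $Q:\mathcal{X}\times\mathcal{X}\to[0,\infty)$ with $Q(x,x)=0$, irreducible, reversible with respect to its stationary distribution $\pi>0$, $\sum\pi=1$. $\mathcal{P}(\mathcal{X})=\{\rho\ge0:\sum_x\pi(x)\rho(x)=1\}$. $(\mathrm{div}_{\mathcal{X}}\Psi)(x)=\frac12\sum_yQ(x,y)(\Psi(y,x)-\Psi(x,y))$. $\theta:[0,\infty)^2\to[0,\infty)$ is continuous, concave, 1-homogeneous, symmetric, $C^\infty$ on $(0,\infty)^2$, $\theta(0,s)=\theta(s,0)=0$, $\theta(s,s)=s$, $\theta>0$ on $(0,\infty)^2$, nondecreasing in each argument; $\theta=-\infty$ if an argument is negative. $\alpha(s,t,m)=m^2/\theta(s,t)$ if $\theta(s,t)>0$, $0$ if $\theta(s,t)=0=m$, $+\infty$ otherwise. Time discretization: $h=1/N$, $t_i=ih$, $I_i=[t_i,t_{i+1})$; $V^1_{n,h}$: continuous functions $[0,1]\to\mathbb{R}^{\mathcal{X}}$ affine on each $I_i$; $V^0_{e,h}$: functions $[0,1]\to\mathbb{R}^{\mathcal{X}\times\mathcal{X}}$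 constant on each $I_i$ (value $m(t_i)$). $\mathcal{CE}_h(\rho_A,\rho_B)$: $(\rho_h,m_h)\in V^1_{n,h}\times V^0_{e,h}$ with $\rho_h(t_0)=\rho_A$, $\rho_h(t_N)=\rho_B$ and $(\rho_h(t_{i+1})-\rho_h(t_i))/h+\mathrm{div}_{\mathcal{X}}m_h(t_i)=0$ for $i=0,\dots,N-1$. For $\rho_h\in V^1_{n,h}$, $(\mathrm{avg}_h\rho_h)(t_i)=\frac12(\rho_h(t_i)+\rho_h(t_{i+1}))$. $\mathcal{A}_h(\rho_h,m_h)=\frac h2\sum_{i=0}^{N-1}\sum_{x,y}\alpha((\mathrm{avg}_h\rho_h)(t_i,x),(\mathrm{avg}_h\rho_h)(t_i,y),m_h(t_i,x,y))Q(x,y)\pi(x)$, and $\mathcal{E}_h(\rho_h,m_h)=\mathcal{A}_h(\rho_h,m_h)$ if $(\rho_h,m_h)\in\mathcal{CE}_h(\rho_A,\rho_B)$ and $+\infty$ otherwise. *)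

theory Defs
  imports "HOL-Analysis.Analysis"
begin

definition markov_setting :: "('x::finite \<Rightarrow> 'x \<Rightarrow> real) \<Rightarrow> ('x \<Rightarrow> real) \<Rightarrow> bool" where
  "markov_setting Q \<pi> \<longleftrightarrow>
     (\<forall>x y. Q x y \<ge> 0) \<and> (\<forall>x. Q x x = 0) \<and>
     (\<forall>x y. (x, y) \<in> {(a, b). Q a b > 0}\<^sup>*) \<and>
     (\<forall>x. \<pi> x > 0) \<and> (\<Sum>x\<in>UNIV. \<pi> x) = 1 \<and>
     (\<forall>y. (\<Sum>x\<in>UNIV. \<pi> x * Q x y) = \<pi> y * (\<Sum>z\<in>UNIV. Q y z)) \<and>
     (\<forall>x y. \<pi> x * Q x y = \<pi> y * Q y x)"

definition prob_density :: "('x::finite \<Rightarrow> real) \<Rightarrow> ('x \<Rightarrow> real) \<Rightarrow> bool" where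
  "prob_density \<pi> \<rho> \<longleftrightarrow> (\<forall>x. \<rho> x \<ge> 0) \<and> (\<Sum>x\<in>UNIV. \<pi> x * \<rho> x) = 1"

definition divX :: "('x::finite \<Rightarrow> 'x \<Rightarrow> real) \<Rightarrow> ('x \<Rightarrow> 'x \<Rightarrow> real) \<Rightarrow> 'x \<Rightarrow> real" where
  "divX Q \<Psi> x = (1/2) * (\<Sum>y\<in>UNIV. Q x y * (\<Psi> y x - \<Psi> x y))"

text \<open>C-infinity on an open set S: f belongs to a class of functions that are
  differentiable on S and whose directional derivatives (in every direction v)
  belong again to the class.\<close>
definition smooth_on :: "(real \<times> real) set \<Rightarrow> (real \<times> real \<Rightarrow> real) \<Rightarrow> bool" where
  "smooth_on S f \<longleftrightarrow> (\<exists>F. f \<in> F \<and>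
     (\<forall>g\<in>F. \<exists>g'. (\<forall>z\<in>S. (g has_derivative g' z) (at z)) \<and> (\<forall>v. (\<lambda>z. g' z v) \<in> F)))"

definition admissible_theta :: "(real \<Rightarrow> real \<Rightarrow> real) \<Rightarrow> bool" where
  "admissible_theta \<theta> \<longleftrightarrow>
     continuous_on ({0..} \<times> {0..}) (\<lambda>(s, t). \<theta> s t) \<and>
     (\<forall>s t s' t' l. s \<ge> 0 \<longrightarrow> t \<ge> 0 \<longrightarrow> s' \<ge> 0 \<longrightarrow> t' \<ge> 0 \<longrightarrow> 0 \<le> l \<longrightarrow> l \<le> 1 \<longrightarrow>
        l * \<theta> s t + (1 - l) * \<theta> s' t' \<le> \<theta> (l * s + (1 - l) * s') (l * t + (1 - l) * t')) \<and>
     (\<forall>l s t. l \<ge> 0 \<longrightarrow> s \<ge> 0 \<longrightarrow> t \<ge> 0 \<longrightarrow> \<theta> (l * s) (l * t) = l * \<theta> s t) \<and>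
     (\<forall>s t. s \<ge> 0 \<longrightarrow> t \<ge> 0 \<longrightarrow> \<theta> s t = \<theta> t s) \<and>
     smooth_on ({0<..} \<times> {0<..}) (\<lambda>(s, t). \<theta> s t) \<and>
     (\<forall>s. s \<ge> 0 \<longrightarrow> \<theta> 0 s = 0 \<and> \<theta> s 0 = 0) \<and>
     (\<forall>s. s \<ge> 0 \<longrightarrow> \<theta> s s = s) \<and>
     (\<forall>s t. s > 0 \<longrightarrow> t > 0 \<longrightarrow> \<theta> s t > 0) \<and>
     (\<forall>s s' t. 0 \<le> s \<longrightarrow> s \<le> s' \<longrightarrow> 0 \<le> t \<longrightarrow> \<theta> s t \<le> \<theta> s' t \<and> \<theta> t s \<le> \<theta> t s')"

text \<open>alpha; theta is taken to be minus infinity when an argument is negative,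
  hence alpha is then +infinity.\<close>
definition alpha :: "(real \<Rightarrow> real \<Rightarrow> real) \<Rightarrow> real \<Rightarrow> real \<Rightarrow> real \<Rightarrow> ereal" where
  "alpha \<theta> s t m =
     (if s \<ge> 0 \<and> t \<ge> 0 \<and> \<theta> s t > 0 then ereal (m\<^sup>2 / \<theta> s t)
      else if s \<ge> 0 \<and> t \<ge> 0 \<and> \<theta> s t = 0 \<and> m = 0 then 0
      else \<infinity>)"

definition tgrid :: "nat \<Rightarrow> nat \<Rightarrow> real" where
  "tgrid N i = real i / real N"

definition V1 :: "nat \<Rightarrow> (real \<Rightarrow> 'x \<Rightarrow> real) set" where
  "V1 N = {\<rho>. continuous_on {0..1} \<rho> \<and>
     (\<forall>i<N. \<forall>t\<in>{tgrid N i..tgrid N (Suc i)}. \<forall>x.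
        \<rho> t x = \<rho> (tgrid N i) x + (t - tgrid N i) * real N * (\<rho> (tgrid N (Suc i)) x - \<rho> (tgrid N i) x))}"

definition V0 :: "nat \<Rightarrow> (real \<Rightarrow> 'x \<Rightarrow> 'x \<Rightarrow> real) set" where
  "V0 N = {m. \<forall>i<N. \<forall>t\<in>{tgrid N i..<tgrid N (Suc i)}. m t = m (tgrid N i)}"

definition CE_h :: "('x::finite \<Rightarrow> 'x \<Rightarrow> real) \<Rightarrow> nat \<Rightarrow> ('x \<Rightarrow> real) \<Rightarrow> ('x \<Rightarrow> real)
    \<Rightarrow> ((real \<Rightarrow> 'x \<Rightarrow> real) \<times> (real \<Rightarrow> 'x \<Rightarrow> 'x \<Rightarrow> real)) set" where
  "CE_h Q N \<rho>A \<rho>B = {(\<rho>, m). \<rho> \<in> V1 N \<and> m \<in> V0 N \<and>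
      \<rho> (tgrid N 0) = \<rho>A \<and> \<rho> (tgrid N N) = \<rho>B \<and>
      (\<forall>i<N. \<forall>x. (\<rho> (tgrid N (Suc i)) x - \<rho> (tgrid N i) x) * real N
                    + divX Q (m (tgrid N i)) x = 0)}"

definition avg_h :: "nat \<Rightarrow> (real \<Rightarrow> 'x \<Rightarrow> real) \<Rightarrow> nat \<Rightarrow> 'x \<Rightarrow> real" where
  "avg_h N \<rho> i x = (\<rho> (tgrid N i) x + \<rho> (tgrid N (Suc i)) x) / 2"

definition A_h :: "('x::finite \<Rightarrow> 'x \<Rightarrow> real) \<Rightarrow> ('x \<Rightarrow> real) \<Rightarrow> (real \<Rightarrow> real \<Rightarrow> real) \<Rightarrow> nat
    \<Rightarrow> (real \<Rightarrow> 'x \<Rightarrow> real) \<Rightarrow> (real \<Rightarrow> 'x \<Rightarrow> 'x \<Rightarrow> real) \<Rightarrow> ereal" where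
  "A_h Q \<pi> \<theta> N \<rho> m = ereal (1 / (2 * real N)) *
     (\<Sum>i<N. \<Sum>x\<in>UNIV. \<Sum>y\<in>UNIV.
        alpha \<theta> (avg_h N \<rho> i x) (avg_h N \<rho> i y) (m (tgrid N i) x y) * ereal (Q x y * \<pi> x))"

definition E_h :: "('x::finite \<Rightarrow> 'x \<Rightarrow> real) \<Rightarrow> ('x \<Rightarrow> real) \<Rightarrow> (real \<Rightarrow> real \<Rightarrow> real) \<Rightarrow> nat
    \<Rightarrow> ('x \<Rightarrow> real) \<Rightarrow> ('x \<Rightarrow> real)
    \<Rightarrow> (real \<Rightarrow> 'x \<Rightarrow> real) \<Rightarrow> (real \<Rightarrow> 'x \<Rightarrow> 'x \<Rightarrow> real) \<Rightarrow> ereal" where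
  "E_h Q \<pi> \<theta> N \<rho>A \<rho>B \<rho> m =
     (if (\<rho>, m) \<in> CE_h Q N \<rho>A \<rho>B then A_h Q \<pi> \<theta> N \<rho> m else \<infinity>)"

definition L2norm_edges :: "('x::finite \<Rightarrow> 'x \<Rightarrow> real) \<Rightarrow> ('x \<Rightarrow> real) \<Rightarrow> (real \<Rightarrow> 'x \<Rightarrow> 'x \<Rightarrow> real) \<Rightarrow> real" where
  "L2norm_edges Q \<pi> m = sqrt (integral {0..1}
      (\<lambda>t. (1/2) * (\<Sum>x\<in>UNIV. \<Sum>y\<in>UNIV. (m t x y)\<^sup>2 * Q x y * \<pi> x)))"

end

theory Submission imports Defs begin

lemma divX_sum:
  assumes "markov_setting Q \<pi>"
  shows "(\<Sum>x\<in>UNIV. \<pi> x * divX Q \<Psi> x) = 0"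
proof -
  have rev: "\<And>x y. \<pi> x * Q x y = \<pi> y * Q y x" using assms unfolding markov_setting_def by blast
  have "(\<Sum>x\<in>UNIV. \<Sum>y\<in>UNIV. \<pi> x * Q x y * \<Psi> y x) = (\<Sum>y\<in>UNIV. \<Sum>x\<in>UNIV. \<pi> x * Q x y * \<Psi> y x)"
    by (rule sum.swap)
  also have "\<dots> = (\<Sum>y\<in>UNIV. \<Sum>x\<in>UNIV. \<pi> y * Q y x * \<Psi> y x)" using rev by simp
  finally have e: "(\<Sum>x\<in>UNIV. \<Sum>y\<in>UNIV. \<pi> x * Q x y * \<Psi> y x) = (\<Sum>x\<in>UNIV. \<Sum>y\<in>UNIV. \<pi> x * Q x y * \<Psi> x y)" .
  have "\<And>x. \<pi> x * divX Q \<Psi> x = (1/2) * ((\<Sum>y\<in>UNIV. \<pi> x * Q x y * \<Psi> y x) - (\<Sum>y\<in>UNIV. \<pi> x * Q x y * \<Psi> x y))"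
    unfolding divX_def by (simp add: sum_distrib_left flip: sum_subtractf) (simp add: algebra_simps)
  then have "(\<Sum>x\<in>UNIV. \<pi> x * divX Q \<Psi> x) = (1/2) * ((\<Sum>x\<in>UNIV. \<Sum>y\<in>UNIV. \<pi> x * Q x y * \<Psi> y x) - (\<Sum>x\<in>UNIV. \<Sum>y\<in>UNIV. \<pi> x * Q x y * \<Psi> x y))"
    by (simp only: sum_distrib_left[symmetric] sum_subtractf[symmetric])
  then show ?thesis using e by simp
qed

lemma out_edge:
  assumes "markov_setting Q \<pi>" "Q x y > 0"
  shows "\<exists>w. Q z w > 0"
proof -
  have "(z, x) \<in> {(a, b). Q a b > 0}\<^sup>*" using assms(1) unfolding markov_setting_def by blast
  then show ?thesis
  proof (cases rule: converse_rtranclE)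
    case base then show ?thesis using assms(2) by blast
  next
    case (step w) then show ?thesis by blast
  qed
qed

lemma step_integral:
  fixes f :: "real \<Rightarrow> real" and c :: "nat \<Rightarrow> real"
  assumes N: "N > 0" and eq: "\<And>i t. i < N \<Longrightarrow> t \<in> {tgrid N i..<tgrid N (Suc i)} \<Longrightarrow> f t = c i"
  shows "k \<le> N \<Longrightarrow> (f has_integral (\<Sum>i<k. c i / real N)) {0..tgrid N k}"
proof (induction k)
  case 0
  then show ?case using has_integral_refl(2)[of f 0] by (simp add: tgrid_def)
next
  case (Suc k)
  have le: "tgrid N k \<le> tgrid N (Suc k)" using N by (simp add: tgrid_def divide_right_mono)
  have "((\<lambda>_. c k) has_integral (Henstock_Kurzweil_Integration.content {tgrid N k..tgrid N (Suc k)} *\<^sub>R c k)) {tgrid N k..tgrid N (Suc k)}"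
    by (rule has_integral_const_real)
  moreover have "Henstock_Kurzweil_Integration.content {tgrid N k..tgrid N (Suc k)} *\<^sub>R c k = c k / real N"
    using le N by (simp add: tgrid_def field_simps)
  ultimately have i1: "((\<lambda>_. c k) has_integral (c k / real N)) {tgrid N k..tgrid N (Suc k)}" by simp
  have i2: "(f has_integral (c k / real N)) {tgrid N k..tgrid N (Suc k)}"
    apply (rule has_integral_spike_finite[of "{tgrid N (Suc k)}", OF _ _ i1])
    using eq[of k] Suc.prems by auto
  have "0 \<le> tgrid N k" by (simp add: tgrid_def)
  from has_integral_combine[OF this le Suc.IH i2] Suc.prems show ?case by simp
qed


lemma le_sum_ereal:
  fixes f :: "'a \<Rightarrow> ereal"
  assumes "finite A" "i \<in> A" "\<And>x. 0 \<le> f x"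
  shows "f i \<le> sum f A"
  using sum_mono2[OF assms(1), of "{i}" f] assms by auto

lemma alpha_nonneg: "alpha \<theta> s t m \<ge> 0"
  unfolding alpha_def by auto

lemma alpha_fin:
  assumes "alpha \<theta> s t m \<noteq> \<infinity>"
  shows "s \<ge> 0 \<and> t \<ge> 0 \<and> ((\<theta> s t > 0 \<and> alpha \<theta> s t m = ereal (m\<^sup>2 / \<theta> s t)) \<or> (m = 0 \<and> alpha \<theta> s t m = 0))"
  using assms unfolding alpha_def by (auto split: if_splits)

theorem lemma3p7:
  fixes Q :: "'x::finite \<Rightarrow> 'x \<Rightarrow> real" and \<pi> :: "'x \<Rightarrow> real" and Ebar :: real
  assumes "markov_setting Q \<pi>"
  shows "\<exists>Mbar::real. \<forall>\<theta> N \<rho>A \<rho>B \<rho> m.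
           admissible_theta \<theta> \<longrightarrow> N > 0 \<longrightarrow>
           prob_density \<pi> \<rho>A \<longrightarrow> prob_density \<pi> \<rho>B \<longrightarrow>
           \<rho> \<in> V1 N \<longrightarrow> m \<in> V0 N \<longrightarrow>
           E_h Q \<pi> \<theta> N \<rho>A \<rho>B \<rho> m \<le> ereal Ebar \<longrightarrow>
           L2norm_edges Q \<pi> m \<le> Mbar"
proof -
  have pipos: "\<And>x. \<pi> x > 0" and Qnn: "\<And>x y. Q x y \<ge> 0"
    using assms unfolding markov_setting_def by auto
  define K where "K = (\<Sum>x\<in>UNIV. 1 / \<pi> x)"
  have Kge: "\<And>z. 1 / \<pi> z \<le> K" unfolding K_def
    by (rule member_le_sum) (use pipos in \<open>auto simp: less_imp_le\<close>)
  have K0: "K \<ge> 0" using Kge[of undefined] pipos[of undefined] by (smt (verit) divide_pos_pos)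
  show ?thesis
  proof (intro exI[of _ "sqrt (K * \<bar>Ebar\<bar>)"] allI impI)
    fix \<theta> N \<rho>A \<rho>B \<rho> and m :: "real \<Rightarrow> 'x \<Rightarrow> 'x \<Rightarrow> real"
    assume adm: "admissible_theta \<theta>" and N: "N > (0::nat)" and pdA: "prob_density \<pi> \<rho>A"
      and pdB: "prob_density \<pi> \<rho>B" and V1: "\<rho> \<in> V1 N" and V0: "m \<in> V0 N"
      and E: "E_h Q \<pi> \<theta> N \<rho>A \<rho>B \<rho> m \<le> ereal Ebar"
    have ce: "(\<rho>, m) \<in> CE_h Q N \<rho>A \<rho>B"
    proof (rule ccontr)
      assume "(\<rho>, m) \<notin> CE_h Q N \<rho>A \<rho>B"
      then show False using E unfolding E_h_def by simp
    qed
    then have Ah: "A_h Q \<pi> \<theta> N \<rho> m \<le> ereal Ebar" using E unfolding E_h_def by simp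
    define a where "a = avg_h N \<rho>"
    define mm where "mm = (\<lambda>i. m (tgrid N i))"
    define trm where "trm = (\<lambda>i x y. alpha \<theta> (a i x) (a i y) (mm i x y) * ereal (Q x y * \<pi> x))"
    define S where "S = (\<Sum>i<N. \<Sum>x\<in>UNIV. \<Sum>y\<in>UNIV. trm i x y)"
    have trm_nn: "\<And>i x y. trm i x y \<ge> 0" unfolding trm_def
      using alpha_nonneg Qnn pipos by (simp add: less_imp_le)
    have SA: "ereal (1 / (2 * real N)) * S \<le> ereal Ebar"
      using Ah unfolding A_h_def S_def trm_def a_def mm_def by simp
    have Sfin: "S \<noteq> \<infinity>"
    proof
      assume "S = \<infinity>"
      then have "ereal (1 / (2 * real N)) * S = \<infinity>" using N by simp
      then show False using SA by simp
    qed
    have trm_le: "trm i x y \<le> S" if "i < N" for i x y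
    proof -
      have "trm i x y \<le> (\<Sum>y\<in>UNIV. trm i x y)"
        by (rule le_sum_ereal) (auto simp: trm_nn)
      also have "\<dots> \<le> (\<Sum>x\<in>UNIV. \<Sum>y\<in>UNIV. trm i x y)"
        by (rule le_sum_ereal) (auto intro: sum_nonneg simp: trm_nn)
      also have "\<dots> \<le> S" unfolding S_def
        by (rule le_sum_ereal) (use that in \<open>auto intro!: sum_nonneg simp: trm_nn\<close>)
      finally show ?thesis .
    qed
    define \<beta> where "\<beta> = (\<lambda>i x y. real_of_ereal (trm i x y))"
    have trm_eq: "trm i x y = ereal (\<beta> i x y)" if "i < N" for i x y
    proof -
      have "trm i x y \<noteq> \<infinity>" using trm_le[OF that, of x y] Sfin by auto
      moreover have "trm i x y \<noteq> -\<infinity>" using trm_nn[of i x y] by auto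
      ultimately show ?thesis unfolding \<beta>_def by (cases "trm i x y") auto
    qed
    have "S = ereal (\<Sum>i<N. \<Sum>x\<in>UNIV. \<Sum>y\<in>UNIV. \<beta> i x y)"
      unfolding S_def by (simp add: trm_eq sum_ereal)
    with SA have betaE: "1 / (2 * real N) * (\<Sum>i<N. \<Sum>x\<in>UNIV. \<Sum>y\<in>UNIV. \<beta> i x y) \<le> Ebar"
      by simp
    have mass: "(\<Sum>x\<in>UNIV. \<pi> x * \<rho> (tgrid N i) x) = 1" if "i \<le> N" for i
      using that
    proof (induction i)
      case 0 then show ?case using ce pdA unfolding CE_h_def prob_density_def by auto
    next
      case (Suc i)
      have "\<And>x. \<rho> (tgrid N (Suc i)) x = \<rho> (tgrid N i) x - divX Q (m (tgrid N i)) x / real N"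
        using ce Suc.prems N unfolding CE_h_def by (auto simp: field_simps)
      then have "(\<Sum>x\<in>UNIV. \<pi> x * \<rho> (tgrid N (Suc i)) x)
          = (\<Sum>x\<in>UNIV. \<pi> x * \<rho> (tgrid N i) x) - (\<Sum>x\<in>UNIV. \<pi> x * divX Q (m (tgrid N i)) x) / real N"
        by (simp add: right_diff_distrib sum_subtractf sum_divide_distrib)
      then show ?case using Suc divX_sum[OF assms] by simp
    qed
    have massa: "(\<Sum>x\<in>UNIV. \<pi> x * a i x) = 1" if "i < N" for i
    proof -
      have "(\<Sum>x\<in>UNIV. \<pi> x * a i x) = ((\<Sum>x\<in>UNIV. \<pi> x * \<rho> (tgrid N i) x) + (\<Sum>x\<in>UNIV. \<pi> x * \<rho> (tgrid N (Suc i)) x)) / 2"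
        unfolding a_def avg_h_def by (simp add: distrib_left flip: sum_divide_distrib sum.distrib)
      then show ?thesis using mass that by simp
    qed
    have a_nn: "a i z \<ge> 0" if hi: "i < N" and hq: "Q x y > 0" for i x y z
    proof -
      obtain w where w: "Q z w > 0" using out_edge[OF assms hq] by blast
      have "trm i z w \<noteq> \<infinity>" using trm_eq[OF hi] by simp
      moreover have "Q z w * \<pi> z > 0" using w pipos by simp
      ultimately have "alpha \<theta> (a i z) (a i w) (mm i z w) \<noteq> \<infinity>"
        unfolding trm_def by auto
      then show ?thesis using alpha_fin by blast
    qed
    have a_le: "a i z \<le> K" if "i < N" "Q x y > 0" for i x y z
    proof -
      have "\<pi> z * a i z \<le> (\<Sum>x\<in>UNIV. \<pi> x * a i x)"
        by (rule member_le_sum) (use a_nn[OF that] pipos in \<open>auto simp: less_imp_le\<close>)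
      then have "\<pi> z * a i z \<le> 1" using massa that by simp
      then have "a i z \<le> 1 / \<pi> z" using pipos[of z] by (simp add: field_simps)
      then show ?thesis using Kge[of z] by simp
    qed
    have mono: "\<And>s s' t. 0 \<le> s \<Longrightarrow> s \<le> s' \<Longrightarrow> 0 \<le> t \<Longrightarrow> \<theta> s t \<le> \<theta> s' t \<and> \<theta> t s \<le> \<theta> t s'"
      and diag: "\<And>s. s \<ge> 0 \<Longrightarrow> \<theta> s s = s"
      using adm unfolding admissible_theta_def by blast+
    have pt: "(mm i x y)\<^sup>2 * Q x y * \<pi> x \<le> K * \<beta> i x y" if "i < N" for i x y
    proof (cases "Q x y > 0")
      case False
      then have "Q x y = 0" using Qnn[of x y] by simp
      then show ?thesis unfolding \<beta>_def trm_def by simp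
    next
      case True
      have p: "Q x y * \<pi> x > 0" using True pipos by simp
      have "trm i x y \<noteq> \<infinity>" using trm_eq[OF that] by simp
      have fin: "alpha \<theta> (a i x) (a i y) (mm i x y) \<noteq> \<infinity>"
      proof
        assume "alpha \<theta> (a i x) (a i y) (mm i x y) = \<infinity>"
        then have "trm i x y = \<infinity>" using True pipos[of x] by (simp add: trm_def)
        with \<open>trm i x y \<noteq> \<infinity>\<close> show False by simp
      qed
      note ax = a_nn[OF that True, of x] and ay = a_nn[OF that True, of y]
        and axK = a_le[OF that True, of x] and ayK = a_le[OF that True, of y]
      have thK: "\<theta> (a i x) (a i y) \<le> K"
      proof -
        have "\<theta> (a i x) (a i y) \<le> \<theta> K (a i y)" using mono[OF ax axK ay] by blast
        also have "\<dots> \<le> \<theta> K K" using mono[OF ay ayK K0] by blast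
        finally show ?thesis using diag[OF K0] by simp
      qed
      from alpha_fin[OF fin] show ?thesis
      proof (elim conjE disjE)
        assume th: "\<theta> (a i x) (a i y) > 0"
          and al: "alpha \<theta> (a i x) (a i y) (mm i x y) = ereal ((mm i x y)\<^sup>2 / \<theta> (a i x) (a i y))"
        have b: "\<beta> i x y = (mm i x y)\<^sup>2 / \<theta> (a i x) (a i y) * (Q x y * \<pi> x)"
          unfolding \<beta>_def trm_def al by simp
        have bnn: "\<beta> i x y \<ge> 0" unfolding b using th p by simp
        have "(mm i x y)\<^sup>2 * Q x y * \<pi> x = \<theta> (a i x) (a i y) * \<beta> i x y"
          unfolding b using th by (simp add: field_simps)
        also have "\<dots> \<le> K * \<beta> i x y" using thK bnn by (rule mult_right_mono)
        finally show ?thesis .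
      next
        assume "mm i x y = 0" "alpha \<theta> (a i x) (a i y) (mm i x y) = 0"
        then show ?thesis unfolding \<beta>_def trm_def by simp
      qed
    qed
    define f where "f = (\<lambda>t. (1/2) * (\<Sum>x\<in>UNIV. \<Sum>y\<in>UNIV. (m t x y)\<^sup>2 * Q x y * \<pi> x))"
    define c where "c = (\<lambda>i. (1/2) * (\<Sum>x\<in>UNIV. \<Sum>y\<in>UNIV. (mm i x y)\<^sup>2 * Q x y * \<pi> x))"
    have feq: "f t = c i" if "i < N" "t \<in> {tgrid N i..<tgrid N (Suc i)}" for i t
    proof -
      have "m t = m (tgrid N i)" using V0 that unfolding V0_def by blast
      then show ?thesis by (simp add: f_def c_def mm_def)
    qed
    have "(f has_integral (\<Sum>i<N. c i / real N)) {0..tgrid N N}"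
      by (rule step_integral[OF N feq]) auto
    moreover have "tgrid N N = 1" using N by (simp add: tgrid_def)
    ultimately have int: "integral {0..1} f = (\<Sum>i<N. c i / real N)"
      by (simp add: integral_unique)
    have "(\<Sum>i<N. c i / real N) = 1 / (2 * real N) * (\<Sum>i<N. \<Sum>x\<in>UNIV. \<Sum>y\<in>UNIV. (mm i x y)\<^sup>2 * Q x y * \<pi> x)"
      unfolding c_def by (simp add: sum_distrib_left sum_divide_distrib)
    also have "\<dots> \<le> 1 / (2 * real N) * (\<Sum>i<N. \<Sum>x\<in>UNIV. \<Sum>y\<in>UNIV. K * \<beta> i x y)"
      by (rule mult_left_mono) (auto intro!: sum_mono pt)
    also have "\<dots> = K * (1 / (2 * real N) * (\<Sum>i<N. \<Sum>x\<in>UNIV. \<Sum>y\<in>UNIV. \<beta> i x y))"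
      by (simp add: sum_distrib_left)
    also have "\<dots> \<le> K * Ebar" using betaE K0 by (rule mult_left_mono)
    also have "\<dots> \<le> K * \<bar>Ebar\<bar>" using K0 by (simp add: mult_left_mono)
    finally have "integral {0..1} f \<le> K * \<bar>Ebar\<bar>" using int by simp
    then show "L2norm_edges Q \<pi> m \<le> sqrt (K * \<bar>Ebar\<bar>)"
      unfolding L2norm_edges_def f_def[symmetric] by simp
  qed
qed

end
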